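(* Let $G$, $P$, $w$ be as in the context, and assume all edge costs $w_{ij}$ are positive integer multiples of a number $\delta>0$. Let $s\neq t$ with at least one directed path from $s$ to $t$. For $\alpha\in(0,1)$ write $U_s^{\{t,\overline{o}\}}(\alpha)=L_{st}+\epsilon_{st}(\alpha)$. Then $\epsilon_{st}(\alpha)=\delta\sum_{j\ge1}\alpha^{j\delta}\gamma_j$ with all $\gamma_j\ge 0$, where, letting $l_1=L_{st}<l_2<\dots$ with $l_{i+1}=l_i+\delta$ enumerate the possible walk costs from $s$ to $t$ and $\mathrm{Pr}_{l_i}$ be the probability (under $P$, with $t$ absorbing) that the walk from $s$ reaches $t$ with total cost exactly $l_i$, $\gamma_j=\dfrac{\sum_{i\ge1}\alpha^{l_i}\mathrm{Pr}_{l_{i+j}}}{\sum_{i\ge1}\alpha^{l_i}\mathrm{Pr}_{l_i}}$. In particular $U_s^{\{t,\overline{o}\}}(\alpha)\ge L_{st}$ for all $\alpha\in(0,1)$.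
   Context: $G=(V,E)$ is a finite directed graph; each edge $e_{ij}\in E$ has a positive cost $w_{ij}$. $P$ is a row-stochastic transition matrix with $P_{ij}>0$ iff $e_{ij}\in E$. $L_{st}$ is the minimum total cost of a directed path from $s$ to $t$. Evaporating network $G_\alpha$: Markov chain on $V\cup\{o\}$ with $P_{ij}(\alpha)=P_{ij}\alpha^{w_{ij}}$ ($i,j\in V$), $P_{io}(\alpha)=1-\sum_jP_{ij}\alpha^{w_{ij}}$, $o$ absorbing. With $t$ and $o$ absorbing and $\mathcal T=V\setminus\{t\}$, let $Q_x$ be the probability that the chain from $x$ is absorbed at $t$, $F(\alpha)=(I-P(\alpha)_{\mathcal T\mathcal T})^{-1}$, $F^{\{t,\overline o\}}_{sm}(\alpha)=F_{sm}(\alpha)Q_m/Q_s$, and avoidance hitting cost $U_s^{\{t,\overline{o}\}}(\alpha)=\sum_{m\in\mathcal T}F^{\{t,\overline o\}}_{sm}(\alpha)\,r_m$, $r_m=\sum_{i}P_{mi}(\alpha)w_{mi}Q_i/Q_m$; it equals the expected total cost of the walk from $s$ conditioned on absorption at $t$. *)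

theory Defs
  imports "HOL-Analysis.Analysis"
begin

definition walk_weight :: "('v \<Rightarrow> 'v \<Rightarrow> real) \<Rightarrow> 'v list \<Rightarrow> real" where
  "walk_weight M vs = (\<Prod>k<length vs - 1. M (vs ! k) (vs ! Suc k))"

definition walk_cost :: "('v \<Rightarrow> 'v \<Rightarrow> real) \<Rightarrow> 'v list \<Rightarrow> real" where
  "walk_cost w vs = (\<Sum>k<length vs - 1. w (vs ! k) (vs ! Suc k))"

definition hit_walks :: "'v \<Rightarrow> 'v \<Rightarrow> nat \<Rightarrow> 'v list set" where
  "hit_walks t x n = {vs. length vs = Suc n \<and> hd vs = x \<and> last vs = t \<and> (\<forall>k<n. vs ! k \<noteq> t)}"

definition is_path :: "('v \<times> 'v) set \<Rightarrow> 'v \<Rightarrow> 'v \<Rightarrow> 'v list \<Rightarrow> bool" where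
  "is_path E s t vs \<longleftrightarrow> vs \<noteq> [] \<and> hd vs = s \<and> last vs = t \<and> distinct vs \<and>
     (\<forall>k < length vs - 1. (vs ! k, vs ! Suc k) \<in> E)"

definition min_cost :: "('v \<times> 'v) set \<Rightarrow> ('v \<Rightarrow> 'v \<Rightarrow> real) \<Rightarrow> 'v \<Rightarrow> 'v \<Rightarrow> real" where
  "min_cost E w s t = Min {walk_cost w vs | vs. is_path E s t vs}"

text \<open>Evaporating transition probabilities P_ij(alpha) = P_ij alpha^(w_ij) between vertices of V
  (the remaining mass goes to the absorbing state o, which never reaches t).\<close>
definition Palpha :: "('v \<Rightarrow> 'v \<Rightarrow> real) \<Rightarrow> ('v \<Rightarrow> 'v \<Rightarrow> real) \<Rightarrow> real \<Rightarrow> 'v \<Rightarrow> 'v \<Rightarrow> real" where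
  "Palpha P w \<alpha> i j = P i j * \<alpha> powr (w i j)"

definition absorb_prob :: "('v::finite \<Rightarrow> 'v \<Rightarrow> real) \<Rightarrow> 'v \<Rightarrow> 'v \<Rightarrow> real" where
  "absorb_prob M t x = (\<Sum>n. \<Sum>vs\<in>hit_walks t x n. walk_weight M vs)"

definition cost_prob :: "('v::finite \<Rightarrow> 'v \<Rightarrow> real) \<Rightarrow> ('v \<Rightarrow> 'v \<Rightarrow> real) \<Rightarrow> 'v \<Rightarrow> 'v \<Rightarrow> real \<Rightarrow> real" where
  "cost_prob M w t s l = (\<Sum>n. \<Sum>vs\<in>{vs\<in>hit_walks t s n. walk_cost w vs = l}. walk_weight M vs)"

text \<open>F = (I - M_TT)^{-1} with T = V - {t}, as a function on T x T (zero outside).\<close>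
definition fund :: "('v::finite \<Rightarrow> 'v \<Rightarrow> real) \<Rightarrow> 'v \<Rightarrow> 'v \<Rightarrow> 'v \<Rightarrow> real" where
  "fund M t = (THE X. (\<forall>i j. i \<noteq> t \<and> j \<noteq> t \<longrightarrow>
        X i j - (\<Sum>k\<in>-{t}. M i k * X k j) = (if i = j then 1 else 0)) \<and>
      (\<forall>i j. i = t \<or> j = t \<longrightarrow> X i j = 0))"

definition avoid_cost :: "('v::finite \<Rightarrow> 'v \<Rightarrow> real) \<Rightarrow> ('v \<Rightarrow> 'v \<Rightarrow> real) \<Rightarrow> 'v \<Rightarrow> 'v \<Rightarrow> real \<Rightarrow> real" where
  "avoid_cost P w t s \<alpha> =
     (let M = Palpha P w \<alpha>;
          Q = absorb_prob M t;
          F = fund M t;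
          Fto = (\<lambda>x m. F x m * Q m / Q x);
          r = (\<lambda>m. (\<Sum>i\<in>UNIV. M m i * w m i * Q i) / Q m)
      in (\<Sum>m\<in>-{t}. Fto s m * r m))"

end

theory Submission
  imports Defs
begin


fun wc :: "('v \<Rightarrow> 'v \<Rightarrow> real) \<Rightarrow> 'v list \<Rightarrow> real" where
  "wc w (x # y # ys) = w x y + wc w (y # ys)"
| "wc w _ = 0"

fun okw :: "('v \<times> 'v) set \<Rightarrow> 'v list \<Rightarrow> bool" where
  "okw E (x # y # ys) = ((x, y) \<in> E \<and> okw E (y # ys))"
| "okw E _ = True"

lemma walk_cost_Cons2: "walk_cost w (x # y # ys) = w x y + walk_cost w (y # ys)"
  unfolding walk_cost_def by (simp del: sum.lessThan_Suc add: sum.lessThan_Suc_shift)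

lemma walk_weight_Cons2: "walk_weight M (x # y # ys) = M x y * walk_weight M (y # ys)"
  unfolding walk_weight_def by (simp del: prod.lessThan_Suc add: prod.lessThan_Suc_shift)

lemma walk_cost_wc: "walk_cost w vs = wc w vs"
proof (induction w vs rule: wc.induct)
  case (1 w x y ys) then show ?case by (simp add: walk_cost_Cons2)
qed (auto simp: walk_cost_def)

lemma walk_weight_single: "walk_weight M [x] = 1"
  by (simp add: walk_weight_def)

lemma okw_nth: "okw E vs \<longleftrightarrow> (\<forall>k < length vs - 1. (vs ! k, vs ! Suc k) \<in> E)"
proof (induction E vs rule: okw.induct)
  case (1 E x y ys)
  show ?case
  proof
    assume "okw E (x # y # ys)"
    then show "\<forall>k<length (x # y # ys) - 1. ((x # y # ys) ! k, (x # y # ys) ! Suc k) \<in> E"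
      using 1 by (auto simp: less_Suc_eq_0_disj)
  next
    assume h: "\<forall>k<length (x # y # ys) - 1. ((x # y # ys) ! k, (x # y # ys) ! Suc k) \<in> E"
    have "(x,y) \<in> E" using h[rule_format, of 0] by simp
    moreover have "okw E (y # ys)" using 1 h by fastforce
    ultimately show "okw E (x # y # ys)" by simp
  qed
qed auto

lemma wc_append: "wc w (xs @ a # ys) = wc w (xs @ [a]) + wc w (a # ys)"
  by (induction w xs rule: wc.induct) (auto, (case_tac ys; simp)?)

lemma okw_append: "okw E (xs @ a # ys) = (okw E (xs @ [a]) \<and> okw E (a # ys))"
  by (induction E xs rule: okw.induct) auto



locale gsetup =
  fixes E :: "('v::finite \<times> 'v) set" and P w :: "'v \<Rightarrow> 'v \<Rightarrow> real"
    and \<delta> \<alpha> :: real and t :: 'v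
  assumes P_nonneg: "\<forall>i j. P i j \<ge> 0"
    and P_stoch: "\<forall>i. (\<Sum>j\<in>UNIV. P i j) = 1"
    and P_edges: "\<forall>i j. P i j > 0 \<longleftrightarrow> (i, j) \<in> E"
    and delta_pos: "\<delta> > 0"
    and w_mult: "\<forall>(i, j)\<in>E. \<exists>k::nat. k \<ge> 1 \<and> w i j = real k * \<delta>"
    and alpha0: "0 < \<alpha>" and alpha1: "\<alpha> < 1"
begin

definition "M = Palpha P w \<alpha>"

lemma M_nonneg: "M i j \<ge> 0"
  using P_nonneg by (simp add: M_def Palpha_def)

lemma w_ge: "(i, j) \<in> E \<Longrightarrow> w i j \<ge> \<delta>"
proof -
  assume "(i, j) \<in> E"
  then obtain k :: nat where "k \<ge> 1" "w i j = real k * \<delta>" using w_mult by blast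
  then show ?thesis using delta_pos by (simp add: mult_le_cancel_right1)
qed

lemma Mw_nonneg: "M i j * w i j \<ge> 0"
proof (cases "(i,j) \<in> E")
  case True then show ?thesis using w_ge[OF True] delta_pos M_nonneg by simp
next
  case False then have "\<not> P i j > 0" using P_edges by blast
  then have "P i j = 0" using P_nonneg[rule_format, of i j] by linarith
  then show ?thesis by (simp add: M_def Palpha_def)
qed

lemma row_lt1: "(\<Sum>j\<in>UNIV. M i j) < 1"
proof -
  have "(\<Sum>j\<in>UNIV. P i j) = 1" using P_stoch by blast
  then obtain j where "P i j \<noteq> 0" by (metis sum.neutral zero_neq_one)
  then have pj: "P i j > 0" using P_nonneg by (simp add: less_le)
  then have "(i,j) \<in> E" using P_edges by blast
  then have wj: "w i j > 0" using w_ge delta_pos by force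
  have le: "M i k \<le> P i k" for k
  proof -
    have "\<alpha> powr w i k \<le> 1 \<or> P i k = 0"
    proof (cases "P i k = 0")
      case False
      then have "(i,k) \<in> E" using P_edges P_nonneg by (simp add: less_le)
      then have "w i k \<ge> 0" using w_ge delta_pos by force
      then show ?thesis using alpha0 alpha1 by (simp add: powr_le1)
    qed simp
    then show ?thesis using P_nonneg unfolding M_def Palpha_def
      by (metis mult.right_neutral mult_eq_0_iff mult_left_mono order_refl)
  qed
  have "\<alpha> powr w i j < 1" using alpha0 alpha1 wj powr_less_mono2[of "w i j" \<alpha> 1] by simp
  then have "M i j < P i j" using pj by (simp add: M_def Palpha_def)
  then have "(\<Sum>j\<in>UNIV. M i j) < (\<Sum>j\<in>UNIV. P i j)"
    by (intro sum_strict_mono_ex1) (auto intro: le)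
  then show ?thesis using P_stoch by simp
qed

definition "c = Max (range (\<lambda>i. \<Sum>j\<in>UNIV. M i j))"

lemma row_le_c: "(\<Sum>j\<in>UNIV. M i j) \<le> c"
  unfolding c_def by (rule Max_ge) auto

lemma c_lt1: "c < 1"
proof -
  have "c \<in> range (\<lambda>i. \<Sum>j\<in>UNIV. M i j)" unfolding c_def by (rule Max_in) auto
  then show ?thesis using row_lt1 by auto
qed

lemma c_nonneg: "c \<ge> 0"
  using row_le_c[of undefined] sum_nonneg[of UNIV "M undefined"] M_nonneg by force

definition "W = Max (range (\<lambda>(i,j). \<bar>w i j\<bar>))"

lemma w_le_W: "w i j \<le> W"
proof -
  have "\<bar>w i j\<bar> \<le> W" unfolding W_def by (rule Max_ge) (auto intro: rev_image_eqI[of "(i,j)"])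
  then show ?thesis by simp
qed

lemma W_nonneg: "W \<ge> 0"
proof -
  have "\<bar>w t t\<bar> \<le> W" unfolding W_def by (rule Max_ge) (auto intro: rev_image_eqI[of "(t,t)"])
  then show ?thesis by simp
qed

lemma Mw_le: "M i j * w i j \<le> M i j * W"
  using w_le_W M_nonneg by (simp add: mult_left_mono)

lemma finite_hit: "finite (hit_walks t x n)"
proof -
  have "hit_walks t x n \<subseteq> {vs. set vs \<subseteq> UNIV \<and> length vs = Suc n}"
    by (auto simp: hit_walks_def)
  moreover have "finite {vs. set vs \<subseteq> (UNIV::'v set) \<and> length vs = Suc n}"
    by (rule finite_lists_length_eq) simp
  ultimately show ?thesis by (rule finite_subset)
qed

lemma hit_0: "hit_walks t x 0 = (if x = t then {[t]} else {})"
  by (auto simp: hit_walks_def length_Suc_conv)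

lemma hit_mem: "vs \<in> hit_walks t i n \<Longrightarrow> \<exists>us. vs = i # us"
  by (auto simp: hit_walks_def length_Suc_conv)

lemma hit_Suc: "hit_walks t x (Suc n) = (if x = t then {} else (\<Union>i. (Cons x) ` hit_walks t i n))"
proof (cases "x = t")
  case True then show ?thesis
    by (auto simp: hit_walks_def length_Suc_conv)
next
  case False
  show ?thesis
  proof (rule set_eqI, rule iffI)
    fix vs assume vs: "vs \<in> hit_walks t x (Suc n)"
    then obtain us where us: "vs = x # us" "length us = Suc n"
      by (auto simp: hit_walks_def length_Suc_conv)
    then obtain i uu where "us = i # uu" by (auto simp: length_Suc_conv)
    have "us \<in> hit_walks t i n"
      unfolding hit_walks_def
    proof (intro CollectI conjI allI impI)
      show "length us = Suc n" by fact
      show "hd us = i" using \<open>us = i # uu\<close> by simp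
      show "last us = t" using vs us \<open>us = i # uu\<close> by (simp add: hit_walks_def)
      fix k assume "k < n"
      then have "vs ! Suc k \<noteq> t" using vs by (simp add: hit_walks_def)
      then show "us ! k \<noteq> t" using us by simp
    qed
    then show "vs \<in> (if x = t then {} else (\<Union>i. (Cons x) ` hit_walks t i n))"
      using False us by auto
  next
    fix vs assume "vs \<in> (if x = t then {} else (\<Union>i. (Cons x) ` hit_walks t i n))"
    then obtain i us where us: "vs = x # us" "us \<in> hit_walks t i n" using False by auto
    then have "us \<noteq> []" by (auto simp: hit_walks_def)
    show "vs \<in> hit_walks t x (Suc n)"
      using us False \<open>us \<noteq> []\<close> unfolding hit_walks_def
      by (auto simp: less_Suc_eq_0_disj)
  qed
qed

lemma sum_hit_Suc:
  assumes "x \<noteq> t"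
  shows "(\<Sum>vs\<in>hit_walks t x (Suc n). f vs) = (\<Sum>i\<in>UNIV. \<Sum>us\<in>hit_walks t i n. f (x # us))"
proof -
  have "(\<Sum>vs\<in>hit_walks t x (Suc n). f vs) = (\<Sum>i\<in>UNIV. \<Sum>vs\<in>(Cons x) ` hit_walks t i n. f vs)"
    unfolding hit_Suc using assms
    by (simp, intro sum.UNION_disjoint) (auto simp: finite_hit dest: hit_mem)
  also have "\<dots> = (\<Sum>i\<in>UNIV. \<Sum>us\<in>hit_walks t i n. f (x # us))"
  proof -
    have "sum f ((#) x ` hit_walks t i n) = (\<Sum>us\<in>hit_walks t i n. f (x # us))" for i
      by (subst sum.reindex) (auto simp: inj_on_def)
    then show ?thesis by simp
  qed
  finally show ?thesis .
qed

definition "S n x = (\<Sum>vs\<in>hit_walks t x n. walk_weight M vs)"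
definition "C n x = (\<Sum>vs\<in>hit_walks t x n. walk_weight M vs * walk_cost w vs)"

lemma S_0: "S 0 x = (if x = t then 1 else 0)"
  by (simp add: S_def hit_0 walk_weight_single)

lemma C_0: "C 0 x = 0"
  by (simp add: C_def hit_0 walk_cost_def)

lemma S_t: "S (Suc n) t = 0" "C (Suc n) t = 0"
  by (simp_all add: S_def C_def hit_Suc)

lemma S_Suc: "x \<noteq> t \<Longrightarrow> S (Suc n) x = (\<Sum>i\<in>UNIV. M x i * S n i)"
  unfolding S_def
  by (subst sum_hit_Suc) (auto simp: sum_distrib_left walk_weight_Cons2 dest!: hit_mem intro!: sum.cong)

lemma C_Suc: "x \<noteq> t \<Longrightarrow> C (Suc n) x = (\<Sum>i\<in>UNIV. M x i * (w x i * S n i + C n i))"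
proof -
  assume x: "x \<noteq> t"
  have "C (Suc n) x = (\<Sum>i\<in>UNIV. \<Sum>us\<in>hit_walks t i n. walk_weight M (x # us) * walk_cost w (x # us))"
    unfolding C_def by (rule sum_hit_Suc[OF x])
  also have "\<dots> = (\<Sum>i\<in>UNIV. \<Sum>us\<in>hit_walks t i n.
        M x i * (w x i * walk_weight M us) + M x i * (walk_weight M us * walk_cost w us))"
    by (intro sum.cong refl) (auto simp: walk_weight_Cons2 walk_cost_Cons2 algebra_simps dest!: hit_mem)
  also have "\<dots> = (\<Sum>i\<in>UNIV. M x i * (w x i * S n i + C n i))"
    unfolding S_def C_def by (simp add: sum.distrib sum_distrib_left distrib_left)
  finally show ?thesis .
qed

lemma S_bound: "0 \<le> S n x \<and> S n x \<le> c ^ n"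
proof (induction n arbitrary: x)
  case 0 then show ?case by (simp add: S_0)
next
  case (Suc n)
  show ?case
  proof (cases "x = t")
    case True then show ?thesis using S_t c_nonneg by simp
  next
    case False
    have "S (Suc n) x \<le> (\<Sum>i\<in>UNIV. M x i * c ^ n)"
      unfolding S_Suc[OF False] by (intro sum_mono mult_left_mono) (use Suc M_nonneg in auto)
    also have "\<dots> = (\<Sum>i\<in>UNIV. M x i) * c ^ n" by (simp add: sum_distrib_right)
    also have "\<dots> \<le> c * c ^ n" using row_le_c c_nonneg by (simp add: mult_right_mono)
    finally show ?thesis unfolding S_Suc[OF False] using Suc M_nonneg
      by (auto intro!: sum_nonneg)
  qed
qed

lemma C_bound: "0 \<le> C n x \<and> C n x \<le> real n * W * c ^ n"
proof (induction n arbitrary: x)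
  case 0 then show ?case by (simp add: C_0)
next
  case (Suc n)
  show ?case
  proof (cases "x = t")
    case True then show ?thesis using S_t c_nonneg W_nonneg by simp
  next
    case False
    have trm: "M x i * (w x i * S n i + C n i) \<le> M x i * (real (Suc n) * W * c ^ n)" for i
    proof -
      have "M x i * w x i * S n i \<le> M x i * W * c ^ n"
        using Mw_le[of x i] S_bound[of n i] Mw_nonneg[of x i] M_nonneg[of x i] W_nonneg
        by (meson mult_mono mult_nonneg_nonneg)
      moreover have "M x i * C n i \<le> M x i * (real n * W * c ^ n)"
        using Suc M_nonneg by (simp add: mult_left_mono)
      ultimately show ?thesis by (simp add: algebra_simps)
    qed
    have tnn: "M x i * (w x i * S n i + C n i) \<ge> 0" for i
      using Mw_nonneg[of x i] S_bound[of n i] Suc[of i] M_nonneg[of x i]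
      by (simp add: distrib_left mult.assoc[symmetric])
    have "C (Suc n) x \<le> (\<Sum>i\<in>UNIV. M x i * (real (Suc n) * W * c ^ n))"
      unfolding C_Suc[OF False] by (intro sum_mono trm)
    also have "\<dots> = (\<Sum>i\<in>UNIV. M x i) * (real (Suc n) * W * c ^ n)" by (simp add: sum_distrib_right)
    also have "\<dots> \<le> c * (real (Suc n) * W * c ^ n)" using row_le_c c_nonneg W_nonneg
      by (intro mult_right_mono) auto
    finally show ?thesis unfolding C_Suc[OF False] using tnn
      by (auto intro!: sum_nonneg simp: algebra_simps)
  qed
qed

lemma S_summable: "summable (\<lambda>n. S n x)"
  by (rule summable_comparison_test[of _ "\<lambda>n. c ^ n"])
     (use S_bound c_nonneg c_lt1 in auto)

lemma C_summable: "summable (\<lambda>n. C n x)"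
proof (rule summable_comparison_test[of _ "\<lambda>n. W * (real (Suc n) * c ^ n)"])
  have "summable (\<lambda>n. real (Suc n) * c ^ n)"
    using geometric_deriv_sums[of c] c_nonneg c_lt1 by (auto simp: sums_iff)
  then show "summable (\<lambda>n. W * (real (Suc n) * c ^ n))" by (rule summable_mult)
  show "\<exists>N. \<forall>n\<ge>N. norm (C n x) \<le> W * (real (Suc n) * c ^ n)"
  proof (intro exI allI impI)
    fix n
    have "C n x \<le> real n * W * c ^ n" using C_bound by blast
    also have "\<dots> \<le> W * (real (Suc n) * c ^ n)" using W_nonneg c_nonneg
      by (simp add: algebra_simps mult_left_mono)
    finally show "norm (C n x) \<le> W * (real (Suc n) * c ^ n)" using C_bound by simp
  qed
qed

definition "Q x = (\<Sum>n. S n x)"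
definition "N x = (\<Sum>n. C n x)"

lemma Q_absorb: "absorb_prob M t x = Q x"
  by (simp add: absorb_prob_def Q_def S_def)

lemma Q_nonneg: "Q x \<ge> 0"
  unfolding Q_def by (rule suminf_nonneg) (use S_summable S_bound in auto)

lemma N_nonneg: "N x \<ge> 0"
  unfolding N_def by (rule suminf_nonneg) (use C_summable C_bound in auto)

lemma shift_sum: fixes f :: "nat \<Rightarrow> real" shows "summable f \<Longrightarrow> suminf f = f 0 + (\<Sum>n. f (Suc n))"
  using suminf_split_initial_segment[of f 1] by simp

lemma Q_t: "Q t = 1"
proof -
  have "Q t = S 0 t + (\<Sum>n. S (Suc n) t)" unfolding Q_def by (rule shift_sum[OF S_summable])
  then show ?thesis by (simp add: S_0 S_t)
qed

lemma N_t: "N t = 0"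
proof -
  have "N t = C 0 t + (\<Sum>n. C (Suc n) t)" unfolding N_def by (rule shift_sum[OF C_summable])
  then show ?thesis by (simp add: C_0 S_t)
qed

lemma Q_rec: "x \<noteq> t \<Longrightarrow> Q x = (\<Sum>i\<in>UNIV. M x i * Q i)"
proof -
  assume x: "x \<noteq> t"
  have "Q x = S 0 x + (\<Sum>n. S (Suc n) x)" unfolding Q_def by (rule shift_sum[OF S_summable])
  also have "\<dots> = (\<Sum>n. \<Sum>i\<in>UNIV. M x i * S n i)" using x by (simp add: S_0 S_Suc)
  also have "\<dots> = (\<Sum>i\<in>UNIV. \<Sum>n. M x i * S n i)"
    by (rule suminf_sum) (intro summable_mult S_summable)
  also have "\<dots> = (\<Sum>i\<in>UNIV. M x i * Q i)"
    unfolding Q_def by (intro sum.cong refl suminf_mult S_summable)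
  finally show ?thesis .
qed

lemma N_rec: "x \<noteq> t \<Longrightarrow> N x = (\<Sum>i\<in>UNIV. M x i * (w x i * Q i + N i))"
proof -
  assume x: "x \<noteq> t"
  have sm: "summable (\<lambda>n. M x i * (w x i * S n i + C n i))" for i
    by (intro summable_mult summable_add S_summable C_summable)
  have "N x = C 0 x + (\<Sum>n. C (Suc n) x)" unfolding N_def by (rule shift_sum[OF C_summable])
  also have "\<dots> = (\<Sum>n. \<Sum>i\<in>UNIV. M x i * (w x i * S n i + C n i))" using x by (simp add: C_0 C_Suc)
  also have "\<dots> = (\<Sum>i\<in>UNIV. \<Sum>n. M x i * (w x i * S n i + C n i))"
    by (rule suminf_sum) (rule sm)
  also have "\<dots> = (\<Sum>i\<in>UNIV. M x i * (w x i * Q i + N i))"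
  proof (intro sum.cong refl)
    fix i
    have "(\<Sum>n. M x i * (w x i * S n i + C n i)) = M x i * (\<Sum>n. w x i * S n i + C n i)"
      by (intro suminf_mult summable_add summable_mult S_summable C_summable)
    also have "(\<Sum>n. w x i * S n i + C n i) = w x i * Q i + N i"
      unfolding Q_def N_def
      by (subst suminf_add[symmetric]) (auto intro: summable_mult S_summable C_summable simp: suminf_mult[OF S_summable])
    finally show "(\<Sum>n. M x i * (w x i * S n i + C n i)) = M x i * (w x i * Q i + N i)" .
  qed
  finally show ?thesis .
qed

end


primrec mpow :: "('v \<Rightarrow> 'v \<Rightarrow> real) \<Rightarrow> 'v \<Rightarrow> nat \<Rightarrow> 'v \<Rightarrow> 'v \<Rightarrow> real" where
  "mpow M t 0 i j = (if i = j \<and> i \<noteq> t then 1 else 0)"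
| "mpow M t (Suc n) i j = (if i \<noteq> t then (\<Sum>k\<in>-{t}. M i k * mpow M t n k j) else 0)"

lemma sum_split_t: "finite (UNIV :: 'v set) \<Longrightarrow> (\<Sum>k\<in>(UNIV::'v set). f k) = f t + (\<Sum>k\<in>-{t}. f k)"
  by (metis Compl_eq_Diff_UNIV UNIV_I sum.remove)

context gsetup begin

lemma rowT_le_c: "(\<Sum>k\<in>-{t}. M i k) \<le> c"
proof -
  have "(\<Sum>k\<in>-{t}. M i k) \<le> (\<Sum>k\<in>UNIV. M i k)"
    by (rule sum_mono2) (auto simp: M_nonneg)
  then show ?thesis using row_le_c[of i] by linarith
qed

lemma uniq:
  assumes h: "\<forall>i. i \<noteq> t \<longrightarrow> y i = (\<Sum>k\<in>-{t}. M i k * y k)" and i: "i \<noteq> t"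
  shows "y i = 0"
proof -
  define m where "m = Max ((\<lambda>i. \<bar>y i\<bar>) ` (-{t}))"
  have ne: "(-{t}) \<noteq> {}" using i by auto
  have mge: "\<bar>y k\<bar> \<le> m" if "k \<noteq> t" for k unfolding m_def by (rule Max_ge) (use that in auto)
  have bnd: "\<bar>y k\<bar> \<le> c * m" if k: "k \<noteq> t" for k
  proof -
    have "\<bar>y k\<bar> = \<bar>\<Sum>j\<in>-{t}. M k j * y j\<bar>" using h k by simp
    also have "\<dots> \<le> (\<Sum>j\<in>-{t}. \<bar>M k j * y j\<bar>)" by (rule sum_abs)
    also have "\<dots> \<le> (\<Sum>j\<in>-{t}. M k j * m)"
      by (intro sum_mono) (auto simp: abs_mult M_nonneg intro!: mult_left_mono mge)
    also have "\<dots> = (\<Sum>j\<in>-{t}. M k j) * m" by (simp add: sum_distrib_right)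
    also have "\<dots> \<le> c * m"
      using rowT_le_c[of k] mge[OF k] by (intro mult_right_mono) auto
    finally show ?thesis .
  qed
  have "m \<in> (\<lambda>i. \<bar>y i\<bar>) ` (-{t})" unfolding m_def by (rule Max_in) (use ne in auto)
  then obtain k where k: "k \<noteq> t" "m = \<bar>y k\<bar>" by auto
  then have "m \<le> c * m" using bnd by simp
  moreover have "m \<ge> 0" using k by simp
  ultimately have "m = 0" using c_lt1 c_nonneg
    by (metis mult_le_cancel_right1 not_less order_antisym_conv)
  then show ?thesis using mge[OF i] by simp
qed

lemma mpow_bound: "0 \<le> mpow M t n i j \<and> mpow M t n i j \<le> c ^ n"
proof (induction n arbitrary: i)
  case 0 then show ?case by simp
next
  case (Suc n)
  have "(\<Sum>k\<in>-{t}. M i k * mpow M t n k j) \<le> (\<Sum>k\<in>-{t}. M i k * c ^ n)"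
    by (intro sum_mono mult_left_mono) (use Suc M_nonneg in auto)
  also have "\<dots> = (\<Sum>k\<in>-{t}. M i k) * c ^ n" by (simp add: sum_distrib_right)
  also have "\<dots> \<le> c * c ^ n" using rowT_le_c c_nonneg by (simp add: mult_right_mono)
  finally have "(\<Sum>k\<in>-{t}. M i k * mpow M t n k j) \<le> c ^ Suc n" by simp
  moreover have "0 \<le> (\<Sum>k\<in>-{t}. M i k * mpow M t n k j)"
    using Suc M_nonneg by (intro sum_nonneg) auto
  ultimately show ?case using c_nonneg by auto
qed

lemma mpow_summable: "summable (\<lambda>n. mpow M t n i j)"
  by (rule summable_comparison_test[of _ "\<lambda>n. c ^ n"])
     (use mpow_bound c_nonneg c_lt1 in auto)

lemma mpow_t: "mpow M t n i t = 0" "mpow M t n t j = 0"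
  by (induction n arbitrary: i) auto

definition "X0 i j = (\<Sum>n. mpow M t n i j)"

lemma X0_prop: "(\<forall>i j. i \<noteq> t \<and> j \<noteq> t \<longrightarrow>
        X0 i j - (\<Sum>k\<in>-{t}. M i k * X0 k j) = (if i = j then 1 else 0)) \<and>
      (\<forall>i j. i = t \<or> j = t \<longrightarrow> X0 i j = 0)"
proof (intro conjI allI impI)
  fix i j assume ij: "i \<noteq> t \<and> j \<noteq> t"
  have "X0 i j = mpow M t 0 i j + (\<Sum>n. mpow M t (Suc n) i j)"
    unfolding X0_def by (rule shift_sum[OF mpow_summable])
  also have "(\<Sum>n. mpow M t (Suc n) i j) = (\<Sum>n. \<Sum>k\<in>-{t}. M i k * mpow M t n k j)"
    using ij by simp
  also have "\<dots> = (\<Sum>k\<in>-{t}. \<Sum>n. M i k * mpow M t n k j)"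
    by (rule suminf_sum) (intro summable_mult mpow_summable)
  also have "\<dots> = (\<Sum>k\<in>-{t}. M i k * X0 k j)"
    unfolding X0_def by (intro sum.cong refl suminf_mult mpow_summable)
  finally show "X0 i j - (\<Sum>k\<in>-{t}. M i k * X0 k j) = (if i = j then 1 else 0)"
    using ij by simp
qed (auto simp: X0_def mpow_t)

lemma fund_X0: "fund M t = X0"
  unfolding fund_def
proof (rule the_equality)
  show "(\<forall>i j. i \<noteq> t \<and> j \<noteq> t \<longrightarrow>
        X0 i j - (\<Sum>k\<in>-{t}. M i k * X0 k j) = (if i = j then 1 else 0)) \<and>
      (\<forall>i j. i = t \<or> j = t \<longrightarrow> X0 i j = 0)" by (rule X0_prop)
next
  fix X assume X: "(\<forall>i j. i \<noteq> t \<and> j \<noteq> t \<longrightarrow>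
        X i j - (\<Sum>k\<in>-{t}. M i k * X k j) = (if i = j then 1 else 0)) \<and>
      (\<forall>i j. i = t \<or> j = t \<longrightarrow> X i j = 0)"
  show "X = X0"
  proof (intro ext)
    fix i j
    show "X i j = X0 i j"
    proof (cases "i = t \<or> j = t")
      case True then show ?thesis using X X0_prop by metis
    next
      case False
      have h: "\<forall>i. i \<noteq> t \<longrightarrow> X i j - X0 i j = (\<Sum>k\<in>-{t}. M i k * (X k j - X0 k j))"
        proof (intro allI impI)
          fix i assume "i \<noteq> t"
          then have "X i j - (\<Sum>k\<in>-{t}. M i k * X k j) = X0 i j - (\<Sum>k\<in>-{t}. M i k * X0 k j)"
            using X X0_prop False by simp
          then show "X i j - X0 i j = (\<Sum>k\<in>-{t}. M i k * (X k j - X0 k j))"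
            by (simp add: right_diff_distrib sum_subtractf)
        qed
      have "i \<noteq> t" using False by simp
      from uniq[OF h this] show ?thesis by simp
    qed
  qed
qed

lemma fund_prop: "(\<forall>i j. i \<noteq> t \<and> j \<noteq> t \<longrightarrow>
        fund M t i j - (\<Sum>k\<in>-{t}. M i k * fund M t k j) = (if i = j then 1 else 0)) \<and>
      (\<forall>i j. i = t \<or> j = t \<longrightarrow> fund M t i j = 0)"
  unfolding fund_X0 by (rule X0_prop)

definition "b m = (\<Sum>i\<in>UNIV. M m i * w m i * Q i)"

lemma b_zero: "m \<noteq> t \<Longrightarrow> Q m = 0 \<Longrightarrow> b m = 0"
proof -
  assume m: "m \<noteq> t" and q: "Q m = 0"
  have "(\<Sum>i\<in>UNIV. M m i * Q i) = 0" using Q_rec[OF m] q by simp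
  then have "\<forall>i\<in>UNIV. M m i * Q i = 0"
    by (subst sum_nonneg_eq_0_iff[symmetric]) (auto simp: M_nonneg Q_nonneg)
  then show ?thesis unfolding b_def by (intro sum.neutral) (metis mult.commute mult_zero_left mult.assoc)
qed

lemma N_eq: "i \<noteq> t \<Longrightarrow> N i - (\<Sum>k\<in>-{t}. M i k * N k) = b i"
proof -
  assume i: "i \<noteq> t"
  have "N i = (\<Sum>k\<in>UNIV. M i k * w i k * Q k) + (\<Sum>k\<in>UNIV. M i k * N k)"
    using N_rec[OF i] by (simp add: distrib_left sum.distrib mult.assoc)
  also have "(\<Sum>k\<in>UNIV. M i k * N k) = (\<Sum>k\<in>-{t}. M i k * N k)"
    using sum_split_t[of "\<lambda>k. M i k * N k" t] N_t by simp
  finally show ?thesis unfolding b_def by simp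
qed

lemma FbN: "s \<noteq> t \<Longrightarrow> (\<Sum>m\<in>-{t}. fund M t s m * b m) = N s"
proof -
  assume s: "s \<noteq> t"
  define Y where "Y i = (\<Sum>m\<in>-{t}. fund M t i m * b m)" for i
  have Yeq: "Y i - (\<Sum>k\<in>-{t}. M i k * Y k) = b i" if i: "i \<noteq> t" for i
  proof -
    have "(\<Sum>k\<in>-{t}. M i k * Y k) = (\<Sum>m\<in>-{t}. (\<Sum>k\<in>-{t}. M i k * fund M t k m) * b m)"
    proof -
      have "(\<Sum>k\<in>-{t}. M i k * Y k) = (\<Sum>k\<in>-{t}. \<Sum>m\<in>-{t}. M i k * fund M t k m * b m)"
        unfolding Y_def by (simp add: sum_distrib_left mult.assoc)
      also have "\<dots> = (\<Sum>m\<in>-{t}. \<Sum>k\<in>-{t}. M i k * fund M t k m * b m)"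
        by (rule sum.swap)
      also have "\<dots> = (\<Sum>m\<in>-{t}. (\<Sum>k\<in>-{t}. M i k * fund M t k m) * b m)"
        by (simp add: sum_distrib_right)
      finally show ?thesis .
    qed
    then have "Y i - (\<Sum>k\<in>-{t}. M i k * Y k) = (\<Sum>m\<in>-{t}. (fund M t i m - (\<Sum>k\<in>-{t}. M i k * fund M t k m)) * b m)"
      unfolding Y_def by (simp add: left_diff_distrib sum_subtractf)
    also have "\<dots> = (\<Sum>m\<in>-{t}. (if i = m then 1 else 0) * b m)"
      using fund_prop i by (intro sum.cong refl) auto
    also have "\<dots> = (\<Sum>m\<in>-{t}. if m = i then b m else 0)"
      by (intro sum.cong refl) auto
    also have "\<dots> = b i" using i by (subst sum.delta) auto
    finally show ?thesis .
  qed
  have "(\<lambda>i. Y i - N i) s = 0"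
  proof (rule uniq)
    show "\<forall>i. i \<noteq> t \<longrightarrow> Y i - N i = (\<Sum>k\<in>-{t}. M i k * (Y k - N k))"
    proof (intro allI impI)
      fix i assume i: "i \<noteq> t"
      show "Y i - N i = (\<Sum>k\<in>-{t}. M i k * (Y k - N k))"
        using Yeq[OF i] N_eq[OF i] by (simp add: right_diff_distrib sum_subtractf)
    qed
  qed (rule s)
  then show ?thesis unfolding Y_def by simp
qed

lemma U_eq:
  assumes s: "s \<noteq> t" and q: "Q s > 0"
  shows "avoid_cost P w t s \<alpha> = N s / Q s"
proof -
  have QA: "absorb_prob M t = Q" using Q_absorb by (simp add: ext)
  have "avoid_cost P w t s \<alpha> =
      (\<Sum>m\<in>-{t}. fund M t s m * Q m / Q s * ((\<Sum>i\<in>UNIV. M m i * w m i * Q i) / Q m))"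
    unfolding avoid_cost_def Let_def M_def[symmetric] QA by simp
  also have "\<dots> = (\<Sum>m\<in>-{t}. fund M t s m * b m / Q s)"
  proof (intro sum.cong refl)
    fix m assume m: "m \<in> -{t}"
    show "fund M t s m * Q m / Q s * ((\<Sum>i\<in>UNIV. M m i * w m i * Q i) / Q m) = fund M t s m * b m / Q s"
    proof (cases "Q m = 0")
      case True then show ?thesis using b_zero m by simp
    next
      case False then show ?thesis unfolding b_def by (simp add: field_simps)
    qed
  qed
  also have "\<dots> = (\<Sum>m\<in>-{t}. fund M t s m * b m) / Q s" by (simp add: sum_divide_distrib)
  also have "\<dots> = N s / Q s" using FbN[OF s] by simp
  finally show ?thesis .
qed

end


lemma swap_nonneg:
  fixes a :: "nat \<Rightarrow> nat \<Rightarrow> real"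
  assumes nn: "\<And>n k. a n k \<ge> 0" and inner: "\<And>n. summable (a n)"
    and outer: "summable (\<lambda>n. suminf (a n))"
  shows "summable (\<lambda>k. \<Sum>n. a n k)" "(\<Sum>k. \<Sum>n. a n k) = (\<Sum>n. \<Sum>k. a n k)"
    "\<And>k. summable (\<lambda>n. a n k)"
proof -
  have hs: "((\<lambda>k. a n k) has_sum suminf (a n)) UNIV" for n
    using sums_nonneg_imp_has_sum[OF summable_sums[OF inner] nn] by simp
  have so: "(\<lambda>n. suminf (a n)) summable_on UNIV"
    by (rule summable_nonneg_imp_summable_on[OF outer]) (use nn inner in \<open>auto intro: suminf_nonneg\<close>)
  have sig: "(\<lambda>(n,k). a n k) summable_on (Sigma UNIV (\<lambda>_. UNIV))"
    by (rule summable_on_SigmaI[where g = "\<lambda>n. suminf (a n)"]) (use hs so nn in auto)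
  then have sig': "(\<lambda>(n,k). a n k) summable_on (UNIV \<times> UNIV)" by simp
  have swp: "(\<lambda>(k,n). a n k) summable_on (UNIV \<times> UNIV)"
    using sig' summable_on_swap[of "\<lambda>(n,k). a n k" "UNIV::nat set" "UNIV::nat set"]
    by (simp add: case_prod_unfold)
  have colk: "(\<lambda>n. a n k) summable_on UNIV" for k
  proof -
    note swp
    then show ?thesis using summable_on_SigmaD1[of "\<lambda>k n. a n k" UNIV "\<lambda>_. UNIV" k]
      by (simp add: case_prod_unfold)
  qed
  have rown: "(\<lambda>k. a n k) summable_on UNIV" for n using hs by (auto simp: summable_on_def)
  show colk': "summable (\<lambda>n. a n k)" for k by (rule summable_on_imp_summable[OF colk])
  have inf_suminf: "infsum f UNIV = suminf f" if "f summable_on UNIV" "\<And>n. f n \<ge> 0" for f :: "nat \<Rightarrow> real"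
  proof -
    have "(f has_sum infsum f UNIV) UNIV" using that by (simp add: has_sum_infsum)
    then have "f sums infsum f UNIV" by (rule has_sum_imp_sums)
    then show ?thesis by (simp add: sums_iff)
  qed
  have sw: "infsum (\<lambda>n. infsum (\<lambda>k. a n k) UNIV) UNIV = infsum (\<lambda>k. infsum (\<lambda>n. a n k) UNIV) UNIV"
    by (rule infsum_swap_banach) (use sig' in simp)
  have e1: "infsum (\<lambda>k. a n k) UNIV = suminf (a n)" for n
    using inf_suminf[OF rown] nn by simp
  have e2: "infsum (\<lambda>n. a n k) UNIV = (\<Sum>n. a n k)" for k
    using inf_suminf[OF colk] nn by simp
  have col_so: "(\<lambda>k. \<Sum>n. a n k) summable_on UNIV"
  proof -
    have "(\<lambda>k. infsum (\<lambda>n. a n k) UNIV) summable_on UNIV"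
      using summable_on_SigmaD[of "\<lambda>(k,n). a n k" UNIV "\<lambda>_. UNIV"] swp colk
        by (simp add: case_prod_unfold)
    then show ?thesis using e2 by simp
  qed
  show "summable (\<lambda>k. \<Sum>n. a n k)" by (rule summable_on_imp_summable[OF col_so])
  have cnn: "(\<Sum>n. a n k) \<ge> 0" for k using colk' nn by (simp add: suminf_nonneg)
  have rnn: "suminf (a n) \<ge> 0" for n using inner nn by (simp add: suminf_nonneg)
  show "(\<Sum>k. \<Sum>n. a n k) = (\<Sum>n. \<Sum>k. a n k)"
    using sw e1 e2 inf_suminf[OF col_so cnn] inf_suminf[OF so rnn] by simp
qed

lemma diag_sum:
  fixes g :: "nat \<Rightarrow> real"
  assumes nn: "\<And>k. g k \<ge> 0" and sg: "summable g" and skg: "summable (\<lambda>k. real k * g k)"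
  shows "summable (\<lambda>j. \<Sum>i. g (i + Suc j))" "(\<Sum>j. \<Sum>i. g (i + Suc j)) = (\<Sum>k. real k * g k)"
proof -
  define h where "h k j = (if j < k then g k else 0)" for k j
  have hfin: "(\<lambda>j. h k j) sums (real k * g k)" for k
  proof -
    have "(\<lambda>j. h k j) sums (\<Sum>j\<in>{..<k}. h k j)" by (rule sums_finite) (auto simp: h_def)
    then show ?thesis by (simp add: h_def)
  qed
  have hnn: "h k j \<ge> 0" for k j by (simp add: h_def nn)
  have inner: "summable (h k)" for k using hfin by (auto simp: sums_iff)
  have outer: "summable (\<lambda>k. suminf (h k))" using hfin skg by (simp add: sums_iff)
  note sw = swap_nonneg[of h, OF hnn inner outer]
  have col: "(\<Sum>k. h k j) = (\<Sum>i. g (i + Suc j))" for j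
  proof -
    have "(\<Sum>k. h k j) = (\<Sum>i. h (i + Suc j) j) + (\<Sum>k<Suc j. h k j)"
      by (rule suminf_split_initial_segment[OF sw(3)])
    then show ?thesis by (simp add: h_def)
  qed
  show "summable (\<lambda>j. \<Sum>i. g (i + Suc j))" using sw(1) col by simp
  show "(\<Sum>j. \<Sum>i. g (i + Suc j)) = (\<Sum>k. real k * g k)"
    using sw(2) col hfin by (simp add: sums_iff)
qed



context gsetup begin

lemma ww_okw: "walk_weight P vs \<noteq> 0 \<Longrightarrow> okw E vs"
proof (induction vs rule: induct_list012)
  case (3 x y zs)
  then have "P x y \<noteq> 0" "walk_weight P (y # zs) \<noteq> 0" by (auto simp: walk_weight_Cons2)
  moreover have "P x y \<ge> 0" using P_nonneg by blast
  ultimately have "P x y > 0" by (simp add: less_le)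
  then have "(x,y) \<in> E" using P_edges by blast
  with 3 \<open>walk_weight P (y # zs) \<noteq> 0\<close> show ?case by simp
qed auto

lemma okw_wc_nonneg: "okw E vs \<Longrightarrow> wc w vs \<ge> 0"
proof (induction vs rule: induct_list012)
  case (3 x y zs)
  then show ?case using w_ge[of x y] delta_pos by simp
qed auto

lemma okw_wc_mult: "okw E vs \<Longrightarrow> \<exists>m::nat. wc w vs = real m * \<delta>"
proof (induction vs rule: induct_list012)
  case (3 x y zs)
  then obtain m :: nat where m: "wc w (y # zs) = real m * \<delta>" by auto
  have "(x,y) \<in> E" using 3 by simp
  then obtain k :: nat where k: "w x y = real k * \<delta>" using w_mult by blast
  have "wc w (x # y # zs) = real (k + m) * \<delta>" using m k by (simp add: algebra_simps)
  then show ?case by blast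
qed auto

lemma hd_append_Cons: "hd (xs @ a # ys) = hd (xs @ [a])" by (cases xs) auto

lemma reduce_path:
  "okw E vs \<Longrightarrow> vs \<noteq> [] \<Longrightarrow> \<exists>ps. okw E ps \<and> distinct ps \<and> ps \<noteq> [] \<and> hd ps = hd vs
      \<and> last ps = last vs \<and> wc w ps \<le> wc w vs"
proof (induction "length vs" arbitrary: vs rule: less_induct)
  case less
  show ?case
  proof (cases "distinct vs")
    case True then show ?thesis using less.prems by (intro exI[of _ vs]) simp
  next
    case False
    then obtain xs ys zs y where vs: "vs = xs @ [y] @ ys @ [y] @ zs"
      using not_distinct_decomp[OF False] by blast
    define vs' where "vs' = xs @ y # zs"
    have e1: "vs = xs @ y # (ys @ y # zs)" using vs by simp
    have e2: "y # ys @ y # zs = (y # ys) @ y # zs" by simp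
    have A1: "okw E vs = (okw E (xs @ [y]) \<and> okw E (y # ys @ y # zs))"
      unfolding e1 by (rule okw_append)
    have A2: "okw E (y # ys @ y # zs) = (okw E ((y # ys) @ [y]) \<and> okw E (y # zs))"
      unfolding e2 by (rule okw_append)
    have ok1: "okw E (xs @ [y])" "okw E (y # ys @ [y])" "okw E (y # zs)"
      using less.prems(1) A1 A2 by auto
    have B1: "wc w vs = wc w (xs @ [y]) + wc w (y # ys @ y # zs)"
      unfolding e1 by (rule wc_append)
    have B2: "wc w (y # ys @ y # zs) = wc w ((y # ys) @ [y]) + wc w (y # zs)"
      unfolding e2 by (rule wc_append)
    have c1: "wc w vs = wc w (xs @ [y]) + wc w (y # ys @ [y]) + wc w (y # zs)"
      using B1 B2 by simp
    have c2: "wc w vs' = wc w (xs @ [y]) + wc w (y # zs)"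
      unfolding vs'_def by (rule wc_append)
    have "wc w (y # ys @ [y]) \<ge> 0" using okw_wc_nonneg ok1(2) by blast
    then have cle: "wc w vs' \<le> wc w vs" using c1 c2 by simp
    have okv: "okw E vs'" unfolding vs'_def using ok1 okw_append[of E xs y zs] by simp
    have len: "length vs' < length vs" unfolding vs vs'_def by simp
    have hdv: "hd vs' = hd vs" unfolding vs vs'_def by (cases xs) simp_all
    have lav: "last vs' = last vs" unfolding vs vs'_def by simp
    obtain ps where "okw E ps \<and> distinct ps \<and> ps \<noteq> [] \<and> hd ps = hd vs'
      \<and> last ps = last vs' \<and> wc w ps \<le> wc w vs'"
      using less.hyps[OF len okv] vs'_def by auto
    then show ?thesis using cle hdv lav by auto
  qed
qed

lemma is_path_iff: "is_path E u v vs \<longleftrightarrow> vs \<noteq> [] \<and> hd vs = u \<and> last vs = v \<and> distinct vs \<and> okw E vs"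
  unfolding is_path_def okw_nth by blast

lemma finite_path_costs: "finite {walk_cost w vs | vs. is_path E u v vs}"
proof -
  have "{vs. is_path E u v vs} \<subseteq> {xs. set xs \<subseteq> UNIV \<and> distinct xs}"
    by (auto simp: is_path_def)
  then have "finite {vs. is_path E u v vs}"
    by (rule finite_subset) (rule finite_subset_distinct, simp)
  then show ?thesis by (simp add: setcompr_eq_image)
qed

end

locale gsetup_s = gsetup E P w \<delta> \<alpha> t for E :: "('v::finite \<times> 'v) set" and P w \<delta> \<alpha> and t :: 'v +
  fixes s :: 'v
  assumes st: "s \<noteq> t" and reach: "\<exists>vs. is_path E s t vs"
begin

definition "L = min_cost E w s t"

lemma L_in: "L \<in> {walk_cost w vs | vs. is_path E s t vs}"
  unfolding L_def min_cost_def by (rule Min_in[OF finite_path_costs]) (use reach in auto)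

lemma L_le: "is_path E s t vs \<Longrightarrow> L \<le> walk_cost w vs"
  unfolding L_def min_cost_def by (rule Min_le[OF finite_path_costs]) auto

lemma L_mult: "\<exists>m0::nat. L = real m0 * \<delta>"
  using L_in okw_wc_mult by (auto simp: is_path_iff walk_cost_wc)

lemma walk_ge_L: "okw E vs \<Longrightarrow> vs \<noteq> [] \<Longrightarrow> hd vs = s \<Longrightarrow> last vs = t \<Longrightarrow> L \<le> wc w vs"
proof -
  assume a: "okw E vs" "vs \<noteq> []" "hd vs = s" "last vs = t"
  obtain ps where ps: "okw E ps" "distinct ps" "ps \<noteq> []" "hd ps = hd vs" "last ps = last vs" "wc w ps \<le> wc w vs"
    using reduce_path[OF a(1,2)] by blast
  have "is_path E s t ps" unfolding is_path_iff using ps a by simp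
  then have "L \<le> wc w ps" using L_le walk_cost_wc by metis
  then show ?thesis using ps by linarith
qed

lemma hit_cost:
  assumes vs: "vs \<in> hit_walks t s n" and nz: "walk_weight P vs \<noteq> 0"
  shows "walk_cost w vs = L + real (nat (round ((walk_cost w vs - L) / \<delta>))) * \<delta>"
proof -
  have ok: "okw E vs" by (rule ww_okw[OF nz])
  have props: "vs \<noteq> []" "hd vs = s" "last vs = t" using vs by (auto simp: hit_walks_def)
  obtain m :: nat where m: "wc w vs = real m * \<delta>" using okw_wc_mult[OF ok] by blast
  obtain m0 :: nat where m0: "L = real m0 * \<delta>" using L_mult by blast
  have "L \<le> wc w vs" using walk_ge_L[OF ok props] .
  then have "m0 \<le> m" using m m0 delta_pos by (simp add: mult_le_cancel_right)
  have h: "(walk_cost w vs - L) / \<delta> = real (m - m0)"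
    using m m0 delta_pos \<open>m0 \<le> m\<close> by (simp add: walk_cost_wc of_nat_diff field_simps)
  have r: "nat (round ((walk_cost w vs - L) / \<delta>)) = m - m0" unfolding h by simp
  have "walk_cost w vs = L + real (m - m0) * \<delta>"
    using m m0 \<open>m0 \<le> m\<close> by (simp add: walk_cost_wc of_nat_diff left_diff_distrib)
  then show ?thesis unfolding r .
qed

lemma ww_M: "walk_weight M vs = walk_weight P vs * \<alpha> powr walk_cost w vs"
proof -
  have a: "\<alpha> \<noteq> 0" using alpha0 by simp
  have "walk_weight M vs = (\<Prod>k<length vs - 1. P (vs ! k) (vs ! Suc k) * \<alpha> powr w (vs ! k) (vs ! Suc k))"
    unfolding walk_weight_def M_def Palpha_def by simp
  also have "\<dots> = walk_weight P vs * (\<Prod>k<length vs - 1. \<alpha> powr w (vs ! k) (vs ! Suc k))"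
    unfolding walk_weight_def by (rule prod.distrib)
  also have "(\<Prod>k<length vs - 1. \<alpha> powr w (vs ! k) (vs ! Suc k)) = \<alpha> powr walk_cost w vs"
    unfolding walk_cost_def by (rule powr_sum[OF a, symmetric])
  finally show ?thesis .
qed

end


context gsetup_s begin

definition "kf vs = nat (round ((walk_cost w vs - L) / \<delta>))"
definition "a n k = (\<Sum>vs\<in>{vs\<in>hit_walks t s n. walk_cost w vs = L + real k * \<delta>}. walk_weight P vs)"
definition "A k = cost_prob P w t s (L + real k * \<delta>)"

lemma A_eq: "A k = (\<Sum>n. a n k)"
  by (simp add: A_def a_def cost_prob_def)

lemma wwP_nonneg: "walk_weight P vs \<ge> 0"
  unfolding walk_weight_def using P_nonneg by (auto intro: prod_nonneg)

lemma a_nonneg: "a n k \<ge> 0"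
  unfolding a_def by (rule sum_nonneg) (rule wwP_nonneg)

lemma L_nonneg: "L \<ge> 0"
  using L_mult delta_pos by auto

lemma kf_iff: "vs \<in> hit_walks t s n \<Longrightarrow> walk_weight P vs \<noteq> 0 \<Longrightarrow>
    (kf vs = k) = (walk_cost w vs = L + real k * \<delta>)"
proof -
  assume h: "vs \<in> hit_walks t s n" "walk_weight P vs \<noteq> 0"
  have c: "walk_cost w vs = L + real (kf vs) * \<delta>" unfolding kf_def by (rule hit_cost[OF h])
  show ?thesis
  proof
    assume "kf vs = k" then show "walk_cost w vs = L + real k * \<delta>" using c by simp
  next
    assume "walk_cost w vs = L + real k * \<delta>"
    then have "real (kf vs) * \<delta> = real k * \<delta>" using c by simp
    then show "kf vs = k" using delta_pos by simp
  qed
qed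

lemma group:
  "(\<lambda>k. \<phi> (L + real k * \<delta>) * a n k) sums (\<Sum>vs\<in>hit_walks t s n. walk_weight P vs * \<phi> (walk_cost w vs))"
proof -
  define H where "H = hit_walks t s n"
  have fH: "finite H" unfolding H_def by (rule finite_hit)
  have a_alt: "a n k = (\<Sum>vs\<in>{vs\<in>H. kf vs = k}. walk_weight P vs)" for k
  proof -
    have "a n k = (\<Sum>vs\<in>H. if walk_cost w vs = L + real k * \<delta> then walk_weight P vs else 0)"
      unfolding a_def H_def by (rule sum.inter_filter[OF finite_hit])
    also have "\<dots> = (\<Sum>vs\<in>H. if kf vs = k then walk_weight P vs else 0)"
    proof (intro sum.cong refl)
      fix vs assume vs: "vs \<in> H"
      show "(if walk_cost w vs = L + real k * \<delta> then walk_weight P vs else 0) =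
            (if kf vs = k then walk_weight P vs else 0)"
      proof (cases "walk_weight P vs = 0")
        case False then show ?thesis using kf_iff[of vs n k] vs unfolding H_def by simp
      qed simp
    qed
    also have "\<dots> = (\<Sum>vs\<in>{vs\<in>H. kf vs = k}. walk_weight P vs)"
      by (rule sum.inter_filter[OF fH, symmetric])
    finally show ?thesis .
  qed
  have zero: "\<phi> (L + real k * \<delta>) * a n k = 0" if "k \<notin> kf ` H" for k
  proof -
    have "{vs\<in>H. kf vs = k} = {}" using that by auto
    then have "a n k = 0" unfolding a_alt by (metis sum.empty)
    then show ?thesis by simp
  qed
  have "(\<lambda>k. \<phi> (L + real k * \<delta>) * a n k) sums (\<Sum>k\<in>kf ` H. \<phi> (L + real k * \<delta>) * a n k)"
    by (rule sums_finite) (use fH zero in auto)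
  also have "(\<Sum>k\<in>kf ` H. \<phi> (L + real k * \<delta>) * a n k) = (\<Sum>vs\<in>H. walk_weight P vs * \<phi> (walk_cost w vs))"
  proof -
    have "(\<Sum>vs\<in>H. walk_weight P vs * \<phi> (walk_cost w vs)) =
          (\<Sum>vs\<in>H. walk_weight P vs * \<phi> (L + real (kf vs) * \<delta>))"
    proof (intro sum.cong refl)
      fix vs assume vs: "vs \<in> H"
      show "walk_weight P vs * \<phi> (walk_cost w vs) = walk_weight P vs * \<phi> (L + real (kf vs) * \<delta>)"
      proof (cases "walk_weight P vs = 0")
        case False then show ?thesis using hit_cost[of vs n] vs unfolding H_def kf_def by simp
      qed simp
    qed
    also have "\<dots> = (\<Sum>k\<in>kf ` H. \<Sum>vs\<in>{vs\<in>H. kf vs = k}. walk_weight P vs * \<phi> (L + real (kf vs) * \<delta>))"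
      by (rule sum.image_gen[OF fH])
    also have "\<dots> = (\<Sum>k\<in>kf ` H. \<phi> (L + real k * \<delta>) * a n k)"
      unfolding a_alt by (intro sum.cong refl) (auto simp: sum_distrib_left mult.commute intro!: sum.cong)
    finally show ?thesis by simp
  qed
  finally show ?thesis unfolding H_def .
qed

lemma S_group: "(\<lambda>k. \<alpha> powr (L + real k * \<delta>) * a n k) sums S n s"
  using group[of "\<lambda>x. \<alpha> powr x" n] by (simp add: S_def ww_M)

lemma C_group: "(\<lambda>k. (\<alpha> powr (L + real k * \<delta>) * (L + real k * \<delta>)) * a n k) sums C n s"
  using group[of "\<lambda>x. \<alpha> powr x * x" n] by (simp add: C_def ww_M mult.assoc)

definition "g k = \<alpha> powr (L + real k * \<delta>) * A k"

lemma g_facts: "summable g" "(\<Sum>k. g k) = Q s" "\<And>k. summable (\<lambda>n. a n k)"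
proof -
  define a' where "a' n k = \<alpha> powr (L + real k * \<delta>) * a n k" for n k
  have nn: "a' n k \<ge> 0" for n k unfolding a'_def using a_nonneg by simp
  have inner: "summable (a' n)" for n using S_group[of n] unfolding a'_def by (auto simp: sums_iff)
  have sn: "suminf (a' n) = S n s" for n using S_group[of n] unfolding a'_def by (auto simp: sums_iff)
  have outer: "summable (\<lambda>n. suminf (a' n))" unfolding sn by (rule S_summable)
  note sw = swap_nonneg[of a', OF nn inner outer]
  have pos: "\<alpha> powr (L + real k * \<delta>) > 0" for k using alpha0 by simp
  show ak: "summable (\<lambda>n. a n k)" for k
  proof -
    have "summable (\<lambda>n. a' n k / \<alpha> powr (L + real k * \<delta>))" using sw(3) by (rule summable_divide)
    then show ?thesis unfolding a'_def using pos[of k] by simp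
  qed
  have col: "(\<Sum>n. a' n k) = g k" for k
    unfolding a'_def g_def A_eq by (rule suminf_mult[OF ak])
  show "summable g" using sw(1) col by simp
  show "(\<Sum>k. g k) = Q s" using sw(2) col sn by (simp add: Q_def)
qed

lemma A_nonneg: "A k \<ge> 0"
  unfolding A_eq by (rule suminf_nonneg[OF g_facts(3) a_nonneg])

lemma g_nonneg: "g k \<ge> 0"
  unfolding g_def using A_nonneg by simp

lemma g2_facts: "summable (\<lambda>k. g k * (L + real k * \<delta>))" "(\<Sum>k. g k * (L + real k * \<delta>)) = N s"
proof -
  define a' where "a' n k = (\<alpha> powr (L + real k * \<delta>) * (L + real k * \<delta>)) * a n k" for n k
  have nn: "a' n k \<ge> 0" for n k unfolding a'_def using a_nonneg L_nonneg delta_pos by simp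
  have inner: "summable (a' n)" for n using C_group[of n] unfolding a'_def by (auto simp: sums_iff)
  have sn: "suminf (a' n) = C n s" for n using C_group[of n] unfolding a'_def by (auto simp: sums_iff)
  have outer: "summable (\<lambda>n. suminf (a' n))" unfolding sn by (rule C_summable)
  note sw = swap_nonneg[of a', OF nn inner outer]
  have col: "(\<Sum>n. a' n k) = g k * (L + real k * \<delta>)" for k
    unfolding a'_def g_def A_eq by (subst suminf_mult[OF g_facts(3)]) simp
  show "summable (\<lambda>k. g k * (L + real k * \<delta>))" using sw(1) col by simp
  show "(\<Sum>k. g k * (L + real k * \<delta>)) = N s" using sw(2) col sn by (simp add: N_def)
qed

lemma Q_pos: "Q s > 0"
proof -
  obtain ps where ps: "is_path E s t ps" using reach by blast
  define n where "n = length ps - 1"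
  have ne: "ps \<noteq> []" using ps by (simp add: is_path_def)
  have len: "length ps = Suc n" using ne unfolding n_def by (cases ps) auto
  have mem: "ps \<in> hit_walks t s n"
    unfolding hit_walks_def
  proof (intro CollectI conjI allI impI)
    show "length ps = Suc n" by (rule len)
    show "hd ps = s" "last ps = t" using ps by (auto simp: is_path_def)
    fix k assume k: "k < n"
    have "ps ! n = t" using \<open>last ps = t\<close> ne len by (simp add: last_conv_nth)
    moreover have "ps ! k \<noteq> ps ! n"
      using ps k len by (simp add: is_path_def nth_eq_iff_index_eq)
    ultimately show "ps ! k \<noteq> t" by simp
  qed
  have wP: "walk_weight P ps > 0"
    unfolding walk_weight_def
  proof (rule prod_pos)
    fix k assume "k \<in> {..<length ps - 1}"
    then have "(ps ! k, ps ! Suc k) \<in> E" using ps by (simp add: is_path_def)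
    then show "P (ps ! k) (ps ! Suc k) > 0" using P_edges by blast
  qed
  have wM: "walk_weight M ps > 0" using wP alpha0 by (simp add: ww_M)
  have "walk_weight M ps \<le> S n s"
    unfolding S_def
    by (rule member_le_sum[OF mem]) (auto simp: ww_M wwP_nonneg finite_hit)
  also have "S n s \<le> (\<Sum>i\<in>{..<Suc n}. S i s)"
    by (rule member_le_sum) (auto simp: S_bound)
  also have "\<dots> \<le> Q s" unfolding Q_def
    by (rule sum_le_suminf[OF S_summable]) (auto simp: S_bound)
  finally show ?thesis using wM by simp
qed

end


context gsetup_s begin

lemma shifted: "summable (\<lambda>i. \<alpha> powr (L + real i * \<delta>) * A (i + m))"
  "(\<Sum>i. \<alpha> powr (L + real i * \<delta>) * A (i + m)) = \<alpha> powr (-(real m * \<delta>)) * (\<Sum>i. g (i + m))"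
proof -
  have e: "\<alpha> powr (L + real i * \<delta>) * A (i + m) = \<alpha> powr (-(real m * \<delta>)) * g (i + m)" for i
  proof -
    have "\<alpha> powr (-(real m * \<delta>)) * \<alpha> powr (L + real (i + m) * \<delta>) = \<alpha> powr (L + real i * \<delta>)"
      by (simp add: powr_add[symmetric] algebra_simps)
    then show ?thesis unfolding g_def by (simp add: mult.assoc[symmetric])
  qed
  have sg: "summable (\<lambda>i. g (i + m))" by (rule summable_ignore_initial_segment[OF g_facts(1)])
  show "summable (\<lambda>i. \<alpha> powr (L + real i * \<delta>) * A (i + m))"
    unfolding e by (rule summable_mult[OF sg])
  show "(\<Sum>i. \<alpha> powr (L + real i * \<delta>) * A (i + m)) = \<alpha> powr (-(real m * \<delta>)) * (\<Sum>i. g (i + m))"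
    unfolding e by (rule suminf_mult[OF sg])
qed

lemma final:
  fixes G :: "nat \<Rightarrow> real"
  assumes G: "\<And>j. G j = (\<Sum>i. \<alpha> powr (min_cost E w s t + real i * \<delta>) * cost_prob P w t s (min_cost E w s t + real (i + j) * \<delta>))
     / (\<Sum>i. \<alpha> powr (min_cost E w s t + real i * \<delta>) * cost_prob P w t s (min_cost E w s t + real i * \<delta>))"
  shows "summable (\<lambda>j. \<alpha> powr (real (Suc j) * \<delta>) * G (Suc j))
      \<and> avoid_cost P w t s \<alpha> - min_cost E w s t = \<delta> * (\<Sum>j. \<alpha> powr (real (Suc j) * \<delta>) * G (Suc j))
      \<and> (\<forall>j\<ge>1. G j \<ge> 0)
      \<and> avoid_cost P w t s \<alpha> \<ge> min_cost E w s t"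
proof -
  have G': "G j = (\<Sum>i. \<alpha> powr (L + real i * \<delta>) * A (i + j)) / (\<Sum>i. \<alpha> powr (L + real i * \<delta>) * A i)" for j
    using G[of j] unfolding L_def[symmetric] A_def[symmetric] .
  have den: "(\<Sum>i. \<alpha> powr (L + real i * \<delta>) * A i) = Q s"
    using g_facts(2) unfolding g_def .
  have Qp: "Q s > 0" by (rule Q_pos)
  have key: "\<alpha> powr (real (Suc j) * \<delta>) * G (Suc j) = (\<Sum>i. g (i + Suc j)) / Q s" for j
  proof -
    have "\<alpha> powr (real (Suc j) * \<delta>) * \<alpha> powr (-(real (Suc j) * \<delta>)) = 1"
      using alpha0 by (simp add: powr_add[symmetric])
    then show ?thesis unfolding G' den shifted(2)
      by (simp add: mult.assoc[symmetric])
  qed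
  have skg: "summable (\<lambda>k. real k * g k)"
  proof -
    have "summable (\<lambda>k. (g k * (L + real k * \<delta>) - L * g k) / \<delta>)"
      by (intro summable_divide summable_diff g2_facts(1) summable_mult g_facts(1))
    moreover have "(g k * (L + real k * \<delta>) - L * g k) / \<delta> = real k * g k" for k
      using delta_pos by (simp add: field_simps)
    ultimately show ?thesis by simp
  qed
  note dg = diag_sum[OF g_nonneg g_facts(1) skg]
  have sum1: "summable (\<lambda>j. \<alpha> powr (real (Suc j) * \<delta>) * G (Suc j))"
    unfolding key by (rule summable_divide[OF dg(1)])
  have sumval: "(\<Sum>j. \<alpha> powr (real (Suc j) * \<delta>) * G (Suc j)) = (\<Sum>k. real k * g k) / Q s"
    unfolding key suminf_divide[OF dg(1)] dg(2) ..
  have Ns: "N s = L * Q s + \<delta> * (\<Sum>k. real k * g k)"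
  proof -
    have "N s = (\<Sum>k. L * g k + \<delta> * (real k * g k))"
      unfolding g2_facts(2)[symmetric] by (simp add: algebra_simps)
    also have "\<dots> = (\<Sum>k. L * g k) + (\<Sum>k. \<delta> * (real k * g k))"
      by (intro suminf_add[symmetric] summable_mult g_facts(1) skg)
    also have "\<dots> = L * Q s + \<delta> * (\<Sum>k. real k * g k)"
      using suminf_mult[OF g_facts(1), of L] suminf_mult[OF skg, of \<delta>] g_facts(2) by simp
    finally show ?thesis .
  qed
  have U: "avoid_cost P w t s \<alpha> = N s / Q s" by (rule U_eq[OF st Qp])
  have eps: "avoid_cost P w t s \<alpha> - L = \<delta> * (\<Sum>j. \<alpha> powr (real (Suc j) * \<delta>) * G (Suc j))"
    unfolding U sumval Ns using Qp by (simp add: field_simps)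
  have Gnn: "G j \<ge> 0" for j
  proof -
    have "(\<Sum>i. g (i + j)) \<ge> 0"
      by (rule suminf_nonneg[OF summable_ignore_initial_segment[OF g_facts(1)]]) (simp add: g_nonneg)
    then show ?thesis unfolding G' den shifted(2) using Qp by simp
  qed
  have "(\<Sum>k. real k * g k) \<ge> 0" by (rule suminf_nonneg[OF skg]) (simp add: g_nonneg)
  then have "\<delta> * (\<Sum>k. real k * g k) / Q s \<ge> 0" using Qp delta_pos by simp
  then have "avoid_cost P w t s \<alpha> \<ge> L" using eps sumval by simp
  then show ?thesis using sum1 eps Gnn unfolding L_def by auto
qed

end

theorem mainTheorem3:
  fixes E :: "('v::finite \<times> 'v) set"
    and P w :: "'v \<Rightarrow> 'v \<Rightarrow> real"
    and \<delta> \<alpha> :: real and s t :: 'v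
  assumes P_nonneg: "\<forall>i j. P i j \<ge> 0"
    and P_stoch: "\<forall>i. (\<Sum>j\<in>UNIV. P i j) = 1"
    and P_edges: "\<forall>i j. P i j > 0 \<longleftrightarrow> (i, j) \<in> E"
    and delta_pos: "\<delta> > 0"
    and w_mult: "\<forall>(i, j)\<in>E. \<exists>k::nat. k \<ge> 1 \<and> w i j = real k * \<delta>"
    and st: "s \<noteq> t"
    and reach: "\<exists>vs. is_path E s t vs"
    and alpha: "0 < \<alpha>" "\<alpha> < 1"
  defines "L \<equiv> min_cost E w s t"
  defines "l \<equiv> (\<lambda>i::nat. L + (real i - 1) * \<delta>)"
  defines "Pr \<equiv> cost_prob P w t s"
  defines "\<gamma> \<equiv> (\<lambda>j::nat. (\<Sum>i. \<alpha> powr (l (Suc i)) * Pr (l (Suc i + j)))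
                          / (\<Sum>i. \<alpha> powr (l (Suc i)) * Pr (l (Suc i))))"
  defines "\<epsilon> \<equiv> avoid_cost P w t s \<alpha> - L"
  shows "summable (\<lambda>j. \<alpha> powr (real (Suc j) * \<delta>) * \<gamma> (Suc j))
      \<and> \<epsilon> = \<delta> * (\<Sum>j. \<alpha> powr (real (Suc j) * \<delta>) * \<gamma> (Suc j))
      \<and> (\<forall>j\<ge>1. \<gamma> j \<ge> 0)
      \<and> avoid_cost P w t s \<alpha> \<ge> L"
proof -
  note Ld = L_def and ld = l_def and Prd = Pr_def and gd = \<gamma>_def and ed = \<epsilon>_def
  interpret gsetup_s E P w \<delta> \<alpha> t s
    by unfold_locales (use assms in auto)
  have G: "\<gamma> j = (\<Sum>i. \<alpha> powr (min_cost E w s t + real i * \<delta>) * cost_prob P w t s (min_cost E w s t + real (i + j) * \<delta>))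
     / (\<Sum>i. \<alpha> powr (min_cost E w s t + real i * \<delta>) * cost_prob P w t s (min_cost E w s t + real i * \<delta>))" for j
  proof -
    have e1: "real (Suc i) - 1 = real i" for i by simp
    have e2: "real (Suc i + j) - 1 = real (i + j)" for i by simp
    show ?thesis unfolding gd ld Prd e1 e2 Ld by (rule refl)
  qed
  show ?thesis using final[of \<gamma>, OF G] unfolding ed Ld by blast
qed


end
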